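(* Let $Q$ be a quiver and let $C\subseteq\Bbbk Q$ be a monomial subcoalgebra. Every finitely generated right coideal of $C$ is contained in a right coideal of $C$ admitting a finite linear basis whose elements are all paths in $C$.
   Context: $\Bbbk$ is a field. The path coalgebra $\Bbbk Q$ has basis all paths of $Q$ (including trivial paths, identified with vertices), with $\Delta(p)=\sum_{xy=p}x\otimes y$ ($xy$ = concatenation) and $\varepsilon(p)=1$ if $p$ is trivial, $0$ otherwise. A subcoalgebra $C\subseteq\Bbbk Q$ is monomial if it contains all vertices and arrows of $Q$ and has a linear basis consisting of paths. A right coideal of $C$ is a subspace $I$ with $\Delta(I)\subseteq I\otimes C$; it is finitely generated if it is the smallest right coideal containing some finite set. *)

theory Defs
  imports Main
begin

text \<open>A quiver Q is given by a source map src and a target map tgt from the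
arrow type 'a to the vertex type 'v (all elements of the types are vertices
resp. arrows).  A path is a pair (v, [a1,...,an]) of a start vertex and a list
of arrows with src a1 = v and tgt ai = src a(i+1); the trivial path at v is
(v, []).  Concatenation x y means x followed by y.\<close>

type_synonym ('v,'a) path = "'v \<times> 'a list"

fun valid_from :: "('a \<Rightarrow> 'v) \<Rightarrow> ('a \<Rightarrow> 'v) \<Rightarrow> 'v \<Rightarrow> 'a list \<Rightarrow> bool" where
  "valid_from src tgt v [] = True"
| "valid_from src tgt v (a # as) = (src a = v \<and> valid_from src tgt (tgt a) as)"

definition is_path :: "('a \<Rightarrow> 'v) \<Rightarrow> ('a \<Rightarrow> 'v) \<Rightarrow> ('v,'a) path \<Rightarrow> bool" where
  "is_path src tgt p = valid_from src tgt (fst p) (snd p)"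

fun path_end :: "('a \<Rightarrow> 'v) \<Rightarrow> 'v \<Rightarrow> 'a list \<Rightarrow> 'v" where
  "path_end tgt v [] = v"
| "path_end tgt v (a # as) = path_end tgt (tgt a) as"

definition trivial_path :: "'v \<Rightarrow> ('v,'a) path" where
  "trivial_path v = (v, [])"

definition arrow_path :: "('a \<Rightarrow> 'v) \<Rightarrow> 'a \<Rightarrow> ('v,'a) path" where
  "arrow_path src a = (src a, [a])"

definition concat_eq :: "('a \<Rightarrow> 'v) \<Rightarrow> ('a \<Rightarrow> 'v) \<Rightarrow> ('v,'a) path \<Rightarrow> ('v,'a) path \<Rightarrow> ('v,'a) path \<Rightarrow> bool" where
  "concat_eq src tgt x y p \<longleftrightarrow> is_path src tgt x \<and> is_path src tgt y \<and>
     path_end tgt (fst x) (snd x) = fst y \<and> p = (fst x, snd x @ snd y)"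

text \<open>Elements of kQ \<otimes> kQ: finitely supported coefficient functions on pairs
of paths (pairs of paths form a basis of kQ \<otimes> kQ).\<close>

definition supp :: "('b \<Rightarrow> 'k::zero) \<Rightarrow> 'b set" where
  "supp f = {b. f b \<noteq> 0}"

definition kQ :: "('a \<Rightarrow> 'v) \<Rightarrow> ('a \<Rightarrow> 'v) \<Rightarrow> (('v,'a) path \<Rightarrow> 'k::zero) set" where
  "kQ src tgt = {f. finite (supp f) \<and> supp f \<subseteq> {p. is_path src tgt p}}"

definition basis_vec :: "'b \<Rightarrow> 'b \<Rightarrow> 'k::{zero,one}" where
  "basis_vec p = (\<lambda>q. if q = p then 1 else 0)"

definition tensor :: "('b \<Rightarrow> 'k::times) \<Rightarrow> ('b \<Rightarrow> 'k) \<Rightarrow> ('b \<times> 'b \<Rightarrow> 'k)" where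
  "tensor u w = (\<lambda>(x, y). u x * w y)"

definition lin_span :: "('b \<Rightarrow> 'k::field) set \<Rightarrow> ('b \<Rightarrow> 'k) set" where
  "lin_span S = {f. \<exists>F c. finite F \<and> F \<subseteq> S \<and> f = (\<lambda>b. \<Sum>u\<in>F. c u * u b)}"

definition subspace_of :: "('b \<Rightarrow> 'k::field) set \<Rightarrow> bool" where
  "subspace_of V \<longleftrightarrow> (\<lambda>b. 0) \<in> V \<and> (\<forall>u\<in>V. \<forall>w\<in>V. (\<lambda>b. u b + w b) \<in> V) \<and> (\<forall>c. \<forall>u\<in>V. (\<lambda>b. c * u b) \<in> V)"

definition tensor_space :: "('b \<Rightarrow> 'k::field) set \<Rightarrow> ('b \<Rightarrow> 'k) set \<Rightarrow> ('b \<times> 'b \<Rightarrow> 'k) set" where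
  "tensor_space U W = lin_span {tensor u w | u w. u \<in> U \<and> w \<in> W}"

definition comult_path :: "('a \<Rightarrow> 'v) \<Rightarrow> ('a \<Rightarrow> 'v) \<Rightarrow> ('v,'a) path \<Rightarrow> (('v,'a) path \<times> ('v,'a) path \<Rightarrow> 'k::field)" where
  "comult_path src tgt p = (\<lambda>(x, y). if concat_eq src tgt x y p then 1 else 0)"

definition comult :: "('a \<Rightarrow> 'v) \<Rightarrow> ('a \<Rightarrow> 'v) \<Rightarrow> (('v,'a) path \<Rightarrow> 'k::field) \<Rightarrow> (('v,'a) path \<times> ('v,'a) path \<Rightarrow> 'k)" where
  "comult src tgt f = (\<lambda>xy. \<Sum>p\<in>supp f. f p * comult_path src tgt p xy)"

definition subcoalgebra :: "('a \<Rightarrow> 'v) \<Rightarrow> ('a \<Rightarrow> 'v) \<Rightarrow> (('v,'a) path \<Rightarrow> 'k::field) set \<Rightarrow> bool" where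
  "subcoalgebra src tgt C \<longleftrightarrow> subspace_of C \<and> C \<subseteq> kQ src tgt \<and>
     (\<forall>f\<in>C. comult src tgt f \<in> tensor_space C C)"

text \<open>Monomial: contains all vertices and arrows and has a linear basis of paths
(distinct paths are linearly independent in kQ, so a basis of paths is just a set of
paths spanning C).\<close>
definition monomial_subcoalgebra :: "('a \<Rightarrow> 'v) \<Rightarrow> ('a \<Rightarrow> 'v) \<Rightarrow> (('v,'a) path \<Rightarrow> 'k::field) set \<Rightarrow> bool" where
  "monomial_subcoalgebra src tgt C \<longleftrightarrow> subcoalgebra src tgt C \<and>
     (\<forall>v. basis_vec (trivial_path v) \<in> C) \<and> (\<forall>a. basis_vec (arrow_path src a) \<in> C) \<and>
     (\<exists>P. P \<subseteq> {p. is_path src tgt p} \<and> C = lin_span (basis_vec ` P))"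

definition right_coideal :: "('a \<Rightarrow> 'v) \<Rightarrow> ('a \<Rightarrow> 'v) \<Rightarrow> (('v,'a) path \<Rightarrow> 'k::field) set \<Rightarrow> (('v,'a) path \<Rightarrow> 'k) set \<Rightarrow> bool" where
  "right_coideal src tgt C I \<longleftrightarrow> subspace_of I \<and> I \<subseteq> C \<and>
     (\<forall>f\<in>I. comult src tgt f \<in> tensor_space I C)"

definition fg_right_coideal :: "('a \<Rightarrow> 'v) \<Rightarrow> ('a \<Rightarrow> 'v) \<Rightarrow> (('v,'a) path \<Rightarrow> 'k::field) set \<Rightarrow> (('v,'a) path \<Rightarrow> 'k) set \<Rightarrow> bool" where
  "fg_right_coideal src tgt C I \<longleftrightarrow> right_coideal src tgt C I \<and>
     (\<exists>S. finite S \<and> I = \<Inter>{J. right_coideal src tgt C J \<and> S \<subseteq> J})"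

end

theory Submission
  imports Defs
begin

lemma bv_inj: "inj (basis_vec :: 'b \<Rightarrow> 'b \<Rightarrow> 'k::{zero_neq_one})"
proof (rule injI)
  fix p q :: 'b assume "(basis_vec p :: 'b \<Rightarrow> 'k) = basis_vec q"
  hence "(basis_vec p :: 'b \<Rightarrow> 'k) p = basis_vec q p" by simp
  thus "p = q" by (auto simp: basis_vec_def split: if_splits)
qed

lemma supp_bv[simp]: "supp (basis_vec p :: 'b \<Rightarrow> 'k::zero_neq_one) = {p}"
  by (auto simp: supp_def basis_vec_def)

lemma span_repr:
  assumes "finite (supp (f :: 'b \<Rightarrow> 'k::field))"
  shows "f = (\<lambda>b. \<Sum>u\<in>basis_vec ` supp f. (\<lambda>u. f (inv basis_vec u)) u * u b)"
proof
  fix b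
  have "(\<Sum>u\<in>basis_vec ` supp f. (\<lambda>u. f (inv basis_vec u)) u * u b)
        = (\<Sum>p\<in>supp f. f p * basis_vec p b)"
    by (subst sum.reindex) (auto intro: inj_on_subset[OF bv_inj] simp: inv_f_f[OF bv_inj])
  also have "\<dots> = (\<Sum>p\<in>supp f. if b = p then f b else 0)"
    by (rule sum.cong) (auto simp: basis_vec_def)
  also have "\<dots> = f b" using assms by (auto simp: supp_def)
  finally show "f b = (\<Sum>u\<in>basis_vec ` supp f. (\<lambda>u. f (inv basis_vec u)) u * u b)" by simp
qed

lemma sum_nz: "(\<Sum>u\<in>F. g u) \<noteq> (0::'k::comm_monoid_add) \<Longrightarrow> \<exists>u\<in>F. g u \<noteq> 0"
  by (meson sum.neutral)

lemma lin_span_bv: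
  "lin_span (basis_vec ` B) = {f::'b\<Rightarrow>'k::field. finite (supp f) \<and> supp f \<subseteq> B}"
proof
  show "lin_span (basis_vec ` B) \<subseteq> {f::'b\<Rightarrow>'k::field. finite (supp f) \<and> supp f \<subseteq> B}"
  proof
    fix f :: "'b \<Rightarrow> 'k" assume "f \<in> lin_span (basis_vec ` B)"
    then obtain F c where F: "finite F" "F \<subseteq> basis_vec ` B" and f: "f = (\<lambda>b. \<Sum>u\<in>F. c u * u b)"
      unfolding lin_span_def by blast
    have "supp f \<subseteq> \<Union>(supp ` F)"
    proof
      fix b assume "b \<in> supp f"
      hence "(\<Sum>u\<in>F. c u * u b) \<noteq> 0" using f by (simp add: supp_def)
      then obtain u where "u \<in> F" "c u * u b \<noteq> 0" using sum_nz by blast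
      thus "b \<in> \<Union>(supp ` F)" by (auto simp: supp_def)
    qed
    moreover have "\<Union>(supp ` F) \<subseteq> B" using F(2) by auto
    moreover have "finite (\<Union>(supp ` F))" using F by auto
    ultimately show "f \<in> {f. finite (supp f) \<and> supp f \<subseteq> B}" by (auto intro: finite_subset)
  qed
next
  show "{f::'b\<Rightarrow>'k::field. finite (supp f) \<and> supp f \<subseteq> B} \<subseteq> lin_span (basis_vec ` B)"
  proof
    fix f :: "'b \<Rightarrow> 'k" assume "f \<in> {f. finite (supp f) \<and> supp f \<subseteq> B}"
    hence a: "finite (supp f)" "supp f \<subseteq> B" by auto
    show "f \<in> lin_span (basis_vec ` B)" unfolding lin_span_def
      apply (rule CollectI, rule exI[of _ "basis_vec ` supp f"], rule exI[of _ "\<lambda>u. f (inv basis_vec u)"])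
      using a span_repr[OF a(1)] by auto
  qed
qed

lemma tensor_supp:
  assumes "\<forall>u\<in>U. supp u \<subseteq> A" "\<forall>w\<in>W. supp w \<subseteq> B" "g \<in> tensor_space U W"
  shows "supp (g :: 'b \<times> 'b \<Rightarrow> 'k::field) \<subseteq> A \<times> B"
proof
  fix xy assume xy: "xy \<in> supp g"
  obtain x y where e: "xy = (x,y)" by fastforce
  obtain F c where F: "F \<subseteq> {tensor u w | u w. u \<in> U \<and> w \<in> W}" and g: "g = (\<lambda>b. \<Sum>t\<in>F. c t * t b)"
    using assms(3) unfolding tensor_space_def lin_span_def by blast
  have "(\<Sum>t\<in>F. c t * t (x,y)) \<noteq> 0" using xy g e by (simp add: supp_def)
  then obtain t where "t \<in> F" "c t * t (x,y) \<noteq> 0" using sum_nz by blast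
  then obtain u w where "u \<in> U" "w \<in> W" "t = tensor u w" "u x * w y \<noteq> 0"
    using F by (auto simp: tensor_def)
  thus "xy \<in> A \<times> B" using assms(1,2) e by (auto simp: supp_def)
qed

lemma tensor_span:
  assumes "finite (supp g)" "supp (g :: 'b \<times> 'b \<Rightarrow> 'k::field) \<subseteq> A \<times> B"
  shows "g \<in> tensor_space (lin_span (basis_vec ` A)) (lin_span (basis_vec ` B))"
proof -
  have "basis_vec ` supp g \<subseteq> {tensor u w | (u::'b\<Rightarrow>'k) w. u \<in> lin_span (basis_vec ` A) \<and> w \<in> lin_span (basis_vec ` B)}"
  proof
    fix t :: "'b \<times> 'b \<Rightarrow> 'k" assume "t \<in> basis_vec ` supp g"
    then obtain x y where xy: "(x,y) \<in> supp g" "t = basis_vec (x,y)" by auto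
    have "t = tensor (basis_vec x :: 'b \<Rightarrow> 'k) (basis_vec y)"
      using xy by (auto simp: tensor_def basis_vec_def)
    moreover have "(basis_vec x :: 'b \<Rightarrow> 'k) \<in> lin_span (basis_vec ` A)"
      "(basis_vec y :: 'b \<Rightarrow> 'k) \<in> lin_span (basis_vec ` B)"
      using xy assms(2) by (auto simp: lin_span_bv)
    ultimately show "t \<in> {tensor u w | (u::'b\<Rightarrow>'k) w. u \<in> lin_span (basis_vec ` A) \<and> w \<in> lin_span (basis_vec ` B)}" by blast
  qed
  thus ?thesis unfolding tensor_space_def lin_span_def
    apply -
    apply (rule CollectI, rule exI[of _ "basis_vec ` supp g"], rule exI[of _ "\<lambda>u. g (inv basis_vec u)"])
    using assms(1) span_repr[OF assms(1)] by auto
qed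


lemma valid_append: "valid_from s t v (as @ bs) = (valid_from s t v as \<and> valid_from s t (path_end t v as) bs)"
  by (induction as arbitrary: v) auto

lemma path_end_append: "path_end t v (as @ bs) = path_end t (path_end t v as) bs"
  by (induction as arbitrary: v) auto

lemma concat_trans:
  assumes "concat_eq s t x' y' x" "concat_eq s t x y p"
  shows "concat_eq s t x' (fst y', snd y' @ snd y) p"
  using assms by (auto simp: concat_eq_def is_path_def valid_append path_end_append)

lemma concat_self:
  assumes "is_path s t p"
  shows "concat_eq s t p (path_end t (fst p) (snd p), []) p"
  using assms by (auto simp: concat_eq_def is_path_def)

lemma concat_finite: "finite {(x,y). concat_eq s t x y p}"
proof (rule finite_subset)
  show "{(x,y). concat_eq s t x y p} \<subseteq>
    (\<lambda>k. ((fst p, take k (snd p)), (path_end t (fst p) (take k (snd p)), drop k (snd p)))) ` {..length (snd p)}"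
  proof
    fix xy assume "xy \<in> {(x,y). concat_eq s t x y p}"
    then obtain x y where e: "xy = (x,y)" "concat_eq s t x y p" by auto
    then show "xy \<in> (\<lambda>k. ((fst p, take k (snd p)), (path_end t (fst p) (take k (snd p)), drop k (snd p)))) ` {..length (snd p)}"
      apply (intro image_eqI[of _ _ "length (snd x)"])
      by (auto simp: concat_eq_def prod_eq_iff)
  qed
qed auto

lemma comult_bv: "comult s t (basis_vec p :: _ \<Rightarrow> 'k::field) = comult_path s t p"
  by (simp add: comult_def supp_bv) (simp add: basis_vec_def)

lemma comult_supp: "supp (comult s t (f :: _ \<Rightarrow> 'k::field)) \<subseteq> {(x,y). \<exists>p\<in>supp f. concat_eq s t x y p}"
proof
  fix xy assume "xy \<in> supp (comult s t f)"
  hence "(\<Sum>p\<in>supp f. f p * comult_path s t p xy) \<noteq> 0" by (simp add: supp_def comult_def)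
  then obtain p where "p \<in> supp f" "f p * comult_path s t p xy \<noteq> 0" using sum_nz by blast
  thus "xy \<in> {(x,y). \<exists>p\<in>supp f. concat_eq s t x y p}"
    by (auto simp: comult_path_def split: prod.splits if_splits)
qed

theorem lemma4p9:
  fixes src tgt :: "'a \<Rightarrow> 'v"
    and C I :: "(('v,'a) path \<Rightarrow> 'k::field) set"
  assumes "monomial_subcoalgebra src tgt C"
    and "fg_right_coideal src tgt C I"
  shows "\<exists>J P. right_coideal src tgt C J \<and> I \<subseteq> J \<and> finite P \<and>
           P \<subseteq> {p. is_path src tgt p \<and> basis_vec p \<in> C} \<and>
           J = lin_span (basis_vec ` P)"
proof -
  obtain P0 where P0: "P0 \<subseteq> {p. is_path src tgt p}" "C = lin_span (basis_vec ` P0)"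
    using assms(1) unfolding monomial_subcoalgebra_def by blast
  have Cc: "C = {f. finite (supp f) \<and> supp f \<subseteq> P0}" using P0(2) lin_span_bv by blast
  have sub: "\<forall>f\<in>C. comult src tgt f \<in> tensor_space C C"
    using assms(1) unfolding monomial_subcoalgebra_def subcoalgebra_def by blast
  have clos: "x \<in> P0 \<and> y \<in> P0" if "p \<in> P0" "concat_eq src tgt x y p" for p x y
  proof -
    have "(basis_vec p :: _ \<Rightarrow> 'k) \<in> C" using that Cc by auto
    hence "comult src tgt (basis_vec p :: _ \<Rightarrow> 'k) \<in> tensor_space C C" using sub by blast
    hence "supp (comult src tgt (basis_vec p :: _ \<Rightarrow> 'k)) \<subseteq> P0 \<times> P0"
      by (intro tensor_supp[of C P0 C P0]) (auto simp: Cc)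
    moreover have "(x,y) \<in> supp (comult src tgt (basis_vec p :: _ \<Rightarrow> 'k))"
      using that(2) by (simp add: comult_bv supp_def comult_path_def)
    ultimately show ?thesis by auto
  qed
  obtain S where S: "finite S" "I = \<Inter>{J. right_coideal src tgt C J \<and> S \<subseteq> J}"
    using assms(2) unfolding fg_right_coideal_def by blast
  have IC: "I \<subseteq> C" using assms(2) unfolding fg_right_coideal_def right_coideal_def by blast
  have SI: "S \<subseteq> I" using S(2) by blast
  define T where "T = \<Union>(supp ` S)"
  have T: "finite T" "T \<subseteq> P0" using S(1) SI IC Cc by (auto simp: T_def)
  define P where "P = {x. \<exists>p\<in>T. \<exists>y. concat_eq src tgt x y p}"
  have "P \<subseteq> fst ` (\<Union>p\<in>T. {(x,y). concat_eq src tgt x y p})" unfolding P_def by force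
  moreover have "finite (\<Union>p\<in>T. {(x,y). concat_eq src tgt x y p})" using T(1) concat_finite by blast
  ultimately have Pfin: "finite P" using finite_subset by blast
  have PP0: "P \<subseteq> P0" unfolding P_def using T(2) clos by blast
  have Ppath: "P \<subseteq> {p. is_path src tgt p}" unfolding P_def by (auto simp: concat_eq_def)
  have Pcl: "x' \<in> P" if "x \<in> P" "concat_eq src tgt x' y' x" for x x' y'
    using that concat_trans unfolding P_def by blast
  define J :: "(('v,'a) path \<Rightarrow> 'k) set" where "J = lin_span (basis_vec ` P)"
  have Jc: "J = {f. finite (supp f) \<and> supp f \<subseteq> P}" unfolding J_def using lin_span_bv by blast
  have "subspace_of J" unfolding Jc subspace_of_def
  proof (intro conjI ballI allI)
    show "(\<lambda>b. 0::'k) \<in> {f. finite (supp f) \<and> supp f \<subseteq> P}" by (simp add: supp_def)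
  next
    fix u w :: "('v,'a) path \<Rightarrow> 'k"
    assume u: "u \<in> {f. finite (supp f) \<and> supp f \<subseteq> P}" and w: "w \<in> {f. finite (supp f) \<and> supp f \<subseteq> P}"
    have "supp (\<lambda>b. u b + w b) \<subseteq> supp u \<union> supp w" by (auto simp: supp_def)
    thus "(\<lambda>b. u b + w b) \<in> {f. finite (supp f) \<and> supp f \<subseteq> P}" using u w by (auto intro: finite_subset)
  next
    fix c :: 'k and u :: "('v,'a) path \<Rightarrow> 'k"
    assume u: "u \<in> {f. finite (supp f) \<and> supp f \<subseteq> P}"
    have "supp (\<lambda>b. c * u b) \<subseteq> supp u" by (auto simp: supp_def)
    thus "(\<lambda>b. c * u b) \<in> {f. finite (supp f) \<and> supp f \<subseteq> P}" using u by (auto intro: finite_subset)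
  qed
  moreover have "J \<subseteq> C" using PP0 by (auto simp: Jc Cc)
  moreover have "\<forall>f\<in>J. comult src tgt f \<in> tensor_space J C"
  proof
    fix f assume f: "f \<in> J"
    have s1: "supp (comult src tgt f) \<subseteq> (\<Union>p\<in>supp f. {(x,y). concat_eq src tgt x y p})"
      using comult_supp by fastforce
    have "finite (\<Union>p\<in>supp f. {(x,y). concat_eq src tgt x y p})" using f concat_finite by (auto simp: Jc)
    hence fin: "finite (supp (comult src tgt f))" using s1 finite_subset by blast
    have "supp (comult src tgt f) \<subseteq> P \<times> P0"
    proof
      fix xy assume "xy \<in> supp (comult src tgt f)"
      then obtain x y p where e: "xy = (x,y)" "p \<in> supp f" "concat_eq src tgt x y p" using s1 by blast
      have "p \<in> P" using e f by (auto simp: Jc)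
      thus "xy \<in> P \<times> P0" using e Pcl clos PP0 by blast
    qed
    thus "comult src tgt f \<in> tensor_space J C"
      using tensor_span[OF fin] unfolding J_def P0(2) by blast
  qed
  ultimately have rc: "right_coideal src tgt C J" unfolding right_coideal_def by blast
  have "S \<subseteq> J"
  proof
    fix s assume s: "s \<in> S"
    have "supp s \<subseteq> P"
    proof
      fix p assume p: "p \<in> supp s"
      hence "p \<in> T" using s by (auto simp: T_def)
      moreover have "is_path src tgt p" using `p \<in> T` T(2) P0(1) by auto
      ultimately show "p \<in> P" unfolding P_def using concat_self by blast
    qed
    thus "s \<in> J" using s SI IC Cc by (auto simp: Jc)
  qed
  hence "I \<subseteq> J" using S(2) rc by blast
  moreover have "P \<subseteq> {p. is_path src tgt p \<and> basis_vec p \<in> C}"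
    using Ppath PP0 by (auto simp: Cc)
  ultimately show ?thesis using rc Pfin J_def by blast
qed

end
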